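(* Let $\rho$ be a good involution of the dihedral quandle $R_n$. (1) For each $i\in R_n$, $\rho(i)=i$ or $\rho(i)=i+n/2$; the latter occurs only if $n$ is even. (2) Let $n$ be even. If $\rho(i)=i+n/2$ for some $i$, then $\rho(j)=j+n/2$ for every $j$ with $i\equiv j \pmod 2$.
   Context: A quandle is a set $X$ with a binary operation $(x,y)\mapsto x^y$ such that $x^x=x$; for all $x,y$ there is a unique $z$ with $z^y=x$ (written $x^{y^{-1}}$); and $(x^y)^z=(x^z)^{(y^z)}$. A good involution of $X$ is a map $\rho:X\to X$ with $\rho\circ\rho={\rm id}$, $\rho(x^y)=\rho(x)^y$ and $x^{\rho(y)}=x^{y^{-1}}$ for all $x,y$. The dihedral quandle $R_n$ is $\mathbb{Z}/n\mathbb{Z}$ with $x^y=2y-x \pmod n$. *)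

theory Defs
  imports Main
begin

text \<open>The dihedral quandle R_n: carrier {0..<n} (representatives of Z/nZ), x^y = 2y - x mod n.\<close>
definition dq :: "nat \<Rightarrow> nat \<Rightarrow> nat \<Rightarrow> nat" where
  "dq n x y = nat ((2 * int y - int x) mod int n)"

definition dq_inv :: "nat \<Rightarrow> nat \<Rightarrow> nat \<Rightarrow> nat" where
  "dq_inv n x y = (THE z. z < n \<and> dq n z y = x)"

definition good_involution_R :: "nat \<Rightarrow> (nat \<Rightarrow> nat) \<Rightarrow> bool" where
  "good_involution_R n \<rho> \<longleftrightarrow>
     (\<forall>x<n. \<rho> x < n) \<and>
     (\<forall>x<n. \<rho> (\<rho> x) = x) \<and>
     (\<forall>x<n. \<forall>y<n. \<rho> (dq n x y) = dq n (\<rho> x) y) \<and>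
     (\<forall>x<n. \<forall>y<n. dq n x (\<rho> y) = dq_inv n x y)"

end

theory Submission
  imports Defs
begin

lemma dq_int: "0 < n \<Longrightarrow> int (dq n x y) = (2 * int y - int x) mod int n"
  unfolding dq_def by simp

lemma dq_lt: "n \<ge> 1 \<Longrightarrow> dq n x y < n"
  unfolding dq_def by (simp add: nat_less_iff)

lemma dq_dq: assumes "x < n" shows "dq n (dq n x y) y = x"
proof -
  have "int (dq n (dq n x y) y) = (2 * int y - (2 * int y - int x) mod int n) mod int n"
    using assms by (simp add: dq_int)
  also have "\<dots> = (2 * int y - (2 * int y - int x)) mod int n"
    by (simp add: mod_diff_right_eq)
  also have "\<dots> = int x" using assms by simp
  finally show ?thesis by simp
qed

lemma dq_inj: assumes "z < n" "z' < n" "dq n z y = dq n z' y" shows "z = z'"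
proof -
  have "(2 * int y - int z) mod int n = (2 * int y - int z') mod int n"
    using assms dq_int by (metis gr_zeroI not_less0)
  hence "(2 * int y - (2 * int y - int z)) mod int n = (2 * int y - (2 * int y - int z')) mod int n"
    by (metis mod_diff_right_eq)
  hence "int z mod int n = int z' mod int n" by simp
  thus ?thesis using assms by simp
qed

lemma dq_inv_eq: assumes "x < n" "n \<ge> 1" shows "dq_inv n x y = dq n x y"
  unfolding dq_inv_def
proof (rule the_equality)
  show "dq n x y < n \<and> dq n (dq n x y) y = x" using assms dq_lt dq_dq by auto
next
  fix z assume "z < n \<and> dq n z y = x"
  thus "z = dq n x y" using dq_inj[of z n "dq n x y" y] dq_dq[OF assms(1)] dq_lt[OF assms(2)]
    by auto
qed

lemma part1:
  assumes "n \<ge> 1" "r < n" "y < n" "(2 * int r) mod int n = (2 * int y) mod int n"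
  shows "r = y \<or> (even n \<and> r = (y + n div 2) mod n)"
proof -
  define d where "d = int r - int y"
  have dv: "int n dvd 2 * d" using assms(4) unfolding d_def
    by (metis mod_eq_dvd_iff right_diff_distrib)
  have b: "\<bar>d\<bar> < int n" using assms unfolding d_def by auto
  show ?thesis
  proof (cases "even n")
    case False
    then have "coprime (int n) 2" by (simp add: coprime_commute)
    hence "int n dvd d" using dv coprime_dvd_mult_right_iff by blast
    hence "d = 0" using b dvd_imp_le_int[of d "int n"] by (cases "d = 0") (auto simp: dvd_abs_iff)
    thus ?thesis unfolding d_def by simp
  next
    case True
    then obtain m where n: "n = 2 * m" by blast
    have "int m dvd d" using dv n by simp
    then obtain k where k: "d = int m * k" by blast
    have "m > 0" using n assms by simp
    have "\<bar>k\<bar> < 2"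
    proof (rule ccontr)
      assume "\<not> \<bar>k\<bar> < 2"
      hence "int m * 2 \<le> int m * \<bar>k\<bar>" using \<open>m > 0\<close> by simp
      also have "\<dots> = \<bar>d\<bar>" using k \<open>m>0\<close> by (simp add: abs_mult)
      finally show False using b n by simp
    qed
    hence "k = 0 \<or> k = 1 \<or> k = -1" by auto
    moreover
    { assume "k = 1" hence "int r = int y + int m" using k d_def by simp
      hence "r = y + m" by simp
      hence "r = (y + n div 2) mod n" using assms n by simp }
    moreover
    { assume "k = -1" hence "int r + int m = int y" using k d_def by simp
      hence "y = r + m" by simp
      hence "(y + n div 2) mod n = (r + n) mod n" using n by (simp add: add.assoc mult_2)
      hence "r = (y + n div 2) mod n" using assms by simp }
    ultimately show ?thesis using k d_def True by auto
  qed
qed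

theorem lemma3p3:
  fixes n :: nat and \<rho> :: "nat \<Rightarrow> nat"
  assumes "n \<ge> 1" and "good_involution_R n \<rho>"
  shows "(\<forall>i<n. \<rho> i = i \<or> (even n \<and> \<rho> i = (i + n div 2) mod n))
       \<and> (even n \<longrightarrow> (\<forall>i<n. \<rho> i = (i + n div 2) mod n \<longrightarrow>
              (\<forall>j<n. i mod 2 = j mod 2 \<longrightarrow> \<rho> j = (j + n div 2) mod n)))"
proof (intro conjI allI impI)
  have G1: "\<And>x. x < n \<Longrightarrow> \<rho> x < n" and
       G3: "\<And>x y. x < n \<Longrightarrow> y < n \<Longrightarrow> \<rho> (dq n x y) = dq n (\<rho> x) y" and
       G4: "\<And>x y. x < n \<Longrightarrow> y < n \<Longrightarrow> dq n x (\<rho> y) = dq_inv n x y"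
    using assms(2) unfolding good_involution_R_def by auto
  fix i assume i: "i < n"
  have "dq n 0 (\<rho> i) = dq n 0 i" using G4[of 0 i] dq_inv_eq[of 0 n i] assms(1) i by simp
  hence "(2 * int (\<rho> i)) mod int n = (2 * int i) mod int n" using dq_int[of n] assms(1) by (metis diff_zero of_nat_0 less_le_trans zero_less_one)
  thus "\<rho> i = i \<or> even n \<and> \<rho> i = (i + n div 2) mod n"
    using part1[OF assms(1) G1[OF i] i] by simp
next
  have G3: "\<And>x y. x < n \<Longrightarrow> y < n \<Longrightarrow> \<rho> (dq n x y) = dq n (\<rho> x) y"
    using assms(2) unfolding good_involution_R_def by auto
  fix i j assume ev: "even n" and i: "i < n" and ri: "\<rho> i = (i + n div 2) mod n"
    and j: "j < n" and par: "i mod 2 = j mod 2"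
  obtain m where n: "n = 2 * m" using ev by blast
  have evij: "even (i + j)" using par by presburger
  define y where "y = ((i + j) div 2) mod n"
  have y: "y < n" using assms(1) y_def by simp
  have y2: "(2 * int y) mod int n = int (i + j) mod int n"
  proof -
    have "(2 * int y) mod int n = (2 * (int ((i + j) div 2) mod int n)) mod int n"
      by (simp add: y_def zmod_int)
    also have "\<dots> = (2 * int ((i + j) div 2)) mod int n" by (simp add: mod_mult_right_eq)
    also have "2 * ((i + j) div 2) = i + j" using evij by simp
    hence "2 * int ((i + j) div 2) = int (i + j)" by linarith
    finally show ?thesis .
  qed
  have "int (dq n i y) = (2 * int y - int i) mod int n" using assms(1) by (simp add: dq_int)
  also have "\<dots> = ((2 * int y) mod int n - int i) mod int n" by (simp add: mod_diff_left_eq)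
  also have "\<dots> = (int (i+j) mod int n - int i) mod int n" using y2 by simp
  also have "\<dots> = (int (i+j) - int i) mod int n" by (simp add: mod_diff_left_eq)
  also have "\<dots> = int j" using j by simp
  finally have dij: "dq n i y = j" by simp
  have "int (\<rho> j) = int (dq n (\<rho> i) y)" using G3[OF i y] dij by simp
  also have "\<dots> = (2 * int y - int ((i + m) mod n)) mod int n" using ri n assms(1) by (simp add: dq_int)
  also have "\<dots> = (2 * int y - (int i + int m) mod int n) mod int n" by (simp add: zmod_int)
  also have "\<dots> = ((2 * int y) mod int n - (int i + int m)) mod int n"
    by (simp add: mod_diff_left_eq mod_diff_right_eq)
  also have "\<dots> = (int (i+j) mod int n - (int i + int m)) mod int n" using y2 by simp
  also have "\<dots> = (int (i+j) - (int i + int m)) mod int n" by (simp add: mod_diff_left_eq)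
  also have "\<dots> = (int j - int m + int n) mod int n" by simp
  also have "\<dots> = (int j + int m) mod int n" using n by (simp add: algebra_simps)
  also have "\<dots> = int ((j + n div 2) mod n)" using n by (simp add: zmod_int)
  finally show "\<rho> j = (j + n div 2) mod n" by simp
qed

end
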